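(* If $\mathbf M\in\mathcal M_1$ and $\mathbf F(\mathbf s)\neq\mathbf M\mathbf s$, then for each $i\in\mathbb N$ there exists $n=n(i)$ such that $$F_i(n;\mathbf 0)=\mathbb P\big(\|\mathbf Z_i(n)\|_1=0\big)>0.$$
   Context: A GWBP/$\infty$ has types $\mathbb N=\{1,2,\dots\}$. Each particle lives one unit of time; a type-$i$ particle produces, independently of everything else, a random vector $\mathbf Z_i=(Z_{ij})_{j\in\mathbb N}$ of children, with $Z_i:=\sum_jZ_{ij}<\infty$ a.s. $\mathbf Z_i(n)=(Z_{ij}(n))_j$ is the generation-$n$ population from one type-$i$ particle, $\|\mathbf Z_i(n)\|_1=\sum_jZ_{ij}(n)$. $F_i(n;\mathbf s)=\mathbb E\prod_js_j^{Z_{ij}(n)}$, $F_i(\mathbf s)=F_i(1;\mathbf s)$; "$\mathbf F(\mathbf s)\neq\mathbf M\mathbf s$" means it is not true that $F_i(\mathbf s)=\sum_jM_{ij}s_j$ for all $i,\mathbf s$. Mean matrix $\mathbf M=(M_{ij})$, $M_{ij}=\mathbb EZ_{ij}$, $M^{(n)}_{ij}=\mathbb EZ_{ij}(n)$, $M_i=\sum_jM_{ij}$. Irreducible: for all $i,j$ some $M^{(n)}_{ij}>0$; aperiodic: gcd of such $n$ is 1; then $\lim_n(M^{(n)}_{ij})^{1/n}=1/R$ for a common $R$. $\mathbf M\in\mathcal M_1$ means: (i) irreducible, aperiodic, $R=1$, 1-recurrent ($\sum_nM^{(n)}_{ij}=\infty$) and 1-positive ($\lim_nM^{(n)}_{ij}>0$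 for all $i,j$); then there are positive eigenvectors $\mathbf v\mathbf M=\mathbf v$, $\mathbf M\mathbf u^T=\mathbf u^T$, unique up to positive multiples, normalized with $\sum_jv_ju_j=1$; (ii) $\sum_jv_j=1$ and $\sup_iu_i<\infty$; (iii) $\lim_{N\to\infty}\sup_iM_i^{-1}\sum_{j>N}M_{ij}=0$ and $\lim_{K\to\infty}\sup_iM_i^{-1}\mathbb E[Z_i;Z_i>K]=0$. *)

theory Defs
  imports "HOL-Probability.Probability"
begin

text \<open>Types are indexed by nat (type 0 here corresponds to type 1 in the paper).
An offspring vector (Z_ij)_j with finite total Z_i is a finitely supported
nat-valued vector, i.e. a multiset of types: count z j = Z_ij, size z = Z_i.
The process is given by its offspring laws  P :: nat => nat multiset pmf.\<close>

definition offspring :: "(nat \<Rightarrow> nat multiset pmf) \<Rightarrow> nat multiset \<Rightarrow> nat multiset pmf" where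
  "offspring P z = foldr (\<lambda>j acc. bind_pmf acc (\<lambda>a. map_pmf (\<lambda>b. a + b) (P j)))
                         (sorted_list_of_multiset z) (return_pmf {#})"

fun gen :: "(nat \<Rightarrow> nat multiset pmf) \<Rightarrow> nat \<Rightarrow> nat \<Rightarrow> nat multiset pmf" where
  "gen P 0 i = return_pmf {#i#}"
| "gen P (Suc n) i = bind_pmf (gen P n i) (offspring P)"

definition Fn :: "(nat \<Rightarrow> nat multiset pmf) \<Rightarrow> nat \<Rightarrow> nat \<Rightarrow> (nat \<Rightarrow> real) \<Rightarrow> real" where
  "Fn P n i s = measure_pmf.expectation (gen P n i) (\<lambda>z. \<Prod>j\<in>set_mset z. s j ^ count z j)"

definition F :: "(nat \<Rightarrow> nat multiset pmf) \<Rightarrow> nat \<Rightarrow> (nat \<Rightarrow> real) \<Rightarrow> real" where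
  "F P i s = Fn P 1 i s"

definition Mn :: "(nat \<Rightarrow> nat multiset pmf) \<Rightarrow> nat \<Rightarrow> nat \<Rightarrow> nat \<Rightarrow> ennreal" where
  "Mn P n i j = (\<integral>\<^sup>+ z. ennreal (real (count z j)) \<partial>(measure_pmf (gen P n i)))"

definition Mmat :: "(nat \<Rightarrow> nat multiset pmf) \<Rightarrow> nat \<Rightarrow> nat \<Rightarrow> ennreal" where
  "Mmat P i j = Mn P 1 i j"

definition Mrow :: "(nat \<Rightarrow> nat multiset pmf) \<Rightarrow> nat \<Rightarrow> ennreal" where
  "Mrow P i = (\<Sum>j. Mmat P i j)"

text \<open>The class M_1 (conditions (i)-(iii)).  M_i is required to be finite and
positive, which the normalisations M_i^{-1} in (iii) presuppose.\<close>
definition in_M1 :: "(nat \<Rightarrow> nat multiset pmf) \<Rightarrow> bool" where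
  "in_M1 P \<longleftrightarrow>
    \<comment> \<open>(i) irreducible\<close>
    (\<forall>i j. \<exists>n. Mn P n i j > 0) \<and>
    \<comment> \<open>(i) aperiodic\<close>
    (\<forall>i. Gcd {n. 0 < n \<and> Mn P n i i > 0} = 1) \<and>
    \<comment> \<open>(i) R = 1: lim_n (M^(n)_ij)^(1/n) = 1\<close>
    (\<forall>i j. (\<lambda>n. root n (enn2real (Mn P n i j))) \<longlonglongrightarrow> 1) \<and>
    \<comment> \<open>(i) 1-recurrent\<close>
    (\<forall>i j. (\<Sum>n. Mn P n i j) = \<infinity>) \<and>
    \<comment> \<open>(i) 1-positive: lim_n M^(n)_ij exists and is > 0\<close>
    (\<forall>i j. \<exists>L. L > 0 \<and> (\<lambda>n. Mn P n i j) \<longlonglongrightarrow> L) \<and>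
    \<comment> \<open>(i)+(ii) positive left/right eigenvectors, normalised, with sum v = 1, sup u < \<infinity>\<close>
    (\<exists>v u :: nat \<Rightarrow> real.
        (\<forall>j. v j > 0) \<and> (\<forall>i. u i > 0) \<and>
        (\<forall>j. (\<Sum>i. ennreal (v i) * Mmat P i j) = ennreal (v j)) \<and>
        (\<forall>i. (\<Sum>j. Mmat P i j * ennreal (u j)) = ennreal (u i)) \<and>
        (\<Sum>j. ennreal (v j * u j)) = 1 \<and>
        (\<Sum>j. ennreal (v j)) = 1 \<and>
        bdd_above (range u)) \<and>
    \<comment> \<open>finiteness/positivity of M_i\<close>
    (\<forall>i. 0 < Mrow P i \<and> Mrow P i < \<infinity>) \<and>
    \<comment> \<open>(iii)\<close>
    ((\<lambda>N. SUP i. (\<Sum>j. if N < j then Mmat P i j else 0) / Mrow P i) \<longlonglongrightarrow> 0) \<and>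
    ((\<lambda>K. SUP i. (\<integral>\<^sup>+ z. (if K < size z then ennreal (real (size z)) else 0) \<partial>(measure_pmf (P i)))
                     / Mrow P i) \<longlonglongrightarrow> 0)"

end

theory Submission
  imports Defs
begin

definition stp :: "(nat \<Rightarrow> nat multiset pmf) \<Rightarrow> nat \<Rightarrow> nat multiset pmf \<Rightarrow> nat multiset pmf" where
  "stp P x acc = bind_pmf acc (\<lambda>a. map_pmf (\<lambda>b. a + b) (P x))"

lemma stp_comm: "stp P x \<circ> stp P y = stp P y \<circ> stp P x"
proof
  fix a
  show "(stp P x \<circ> stp P y) a = (stp P y \<circ> stp P x) a"
    unfolding stp_def comp_def map_pmf_def bind_assoc_pmf bind_return_pmf
    apply (rule bind_pmf_cong[OF refl])
    apply (subst bind_commute_pmf)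
    apply (simp add: add_ac)
    done
qed

lemma offspring_stp: "offspring P z = foldr (stp P) (sorted_list_of_multiset z) (return_pmf {#})"
  unfolding offspring_def stp_def[abs_def] by simp

lemma offspring_empty[simp]: "offspring P {#} = return_pmf {#}"
  unfolding offspring_def by simp

lemma offspring_add_mset: "offspring P (add_mset x z) = stp P x (offspring P z)"
proof -
  have c: "\<And>xs. foldr (stp P) xs = fold (stp P) xs"
    by (rule foldr_fold) (simp add: stp_comm)
  have "fold (stp P) (sorted_list_of_multiset (add_mset x z)) = fold (stp P) (sorted_list_of_multiset z @ [x])"
    by (rule fold_multiset_equiv) (auto simp: stp_comm)
  then show ?thesis unfolding offspring_stp c by simp
qed

lemma set_offspring_add_mset:
  "set_pmf (offspring P (add_mset x z)) = {a + b |a b. a \<in> set_pmf (offspring P z) \<and> b \<in> set_pmf (P x)}"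
  unfolding offspring_add_mset stp_def by auto

lemma offspring_single: "offspring P {#i#} = P i"
  using offspring_add_mset[of P i "{#}"] unfolding stp_def by (simp add: map_pmf_def bind_return_pmf bind_return_pmf')

lemma offspring_plus:
  "x \<in> set_pmf (offspring P a) \<Longrightarrow> y \<in> set_pmf (offspring P b) \<Longrightarrow> x + y \<in> set_pmf (offspring P (a + b))"
proof (induction a arbitrary: x)
  case empty
  then show ?case by simp
next
  case (add u a)
  from add.prems(1) obtain x' b' where x': "x' \<in> set_pmf (offspring P a)" "b' \<in> set_pmf (P u)" "x = x' + b'"
    unfolding set_offspring_add_mset by auto
  have "x' + y \<in> set_pmf (offspring P (a + b))" using add.IH[OF x'(1) add.prems(2)] .
  then have "(x' + y) + b' \<in> set_pmf (offspring P (add_mset u (a + b)))"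
    unfolding set_offspring_add_mset using x'(2) by blast
  then show ?case using x'(3) by (simp add: add_ac)
qed

fun genM :: "(nat \<Rightarrow> nat multiset pmf) \<Rightarrow> nat \<Rightarrow> nat multiset \<Rightarrow> nat multiset pmf" where
  "genM P 0 z = return_pmf z"
| "genM P (Suc n) z = bind_pmf (genM P n z) (offspring P)"

lemma gen_genM: "gen P n i = genM P n {#i#}"
  by (induction n) auto

lemma genM_first: "genM P (Suc n) z = bind_pmf (offspring P z) (genM P n)"
proof (induction n arbitrary: z)
  case 0
  then show ?case by (simp add: bind_return_pmf bind_return_pmf')
next
  case (Suc n)
  have "genM P (Suc (Suc n)) z = bind_pmf (bind_pmf (offspring P z) (genM P n)) (offspring P)"
    using Suc by simp
  also have "\<dots> = bind_pmf (offspring P z) (genM P (Suc n))"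
    unfolding bind_assoc_pmf by (rule bind_pmf_cong[OF refl]) simp
  finally show ?case .
qed

lemma genM_empty[simp]: "genM P n {#} = return_pmf {#}"
  by (induction n) (auto simp: bind_return_pmf)

lemma genM_plus:
  "x \<in> set_pmf (genM P n a) \<Longrightarrow> y \<in> set_pmf (genM P n b) \<Longrightarrow> x + y \<in> set_pmf (genM P n (a + b))"
proof (induction n arbitrary: x y)
  case 0
  then show ?case by simp
next
  case (Suc n)
  from Suc.prems obtain x' y' where "x' \<in> set_pmf (genM P n a)" "x \<in> set_pmf (offspring P x')"
     "y' \<in> set_pmf (genM P n b)" "y \<in> set_pmf (offspring P y')" by auto
  then show ?case using Suc.IH offspring_plus by fastforce
qed

lemma genM_mono: "{#} \<in> set_pmf (genM P n z) \<Longrightarrow> {#} \<in> set_pmf (genM P (n + k) z)"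
proof (induction k)
  case (Suc k)
  then have "{#} \<in> set_pmf (offspring P {#})" by simp
  with Suc show ?case by (auto intro!: bexI[of _ "{#}"])
qed simp

lemma genM_mortal:
  "(\<forall>j\<in>#b. \<exists>n. {#} \<in> set_pmf (gen P n j)) \<Longrightarrow> \<exists>N. \<forall>m\<ge>N. {#} \<in> set_pmf (genM P m b)"
proof (induction b)
  case empty
  then show ?case by simp
next
  case (add x b)
  then obtain N where N: "\<forall>m\<ge>N. {#} \<in> set_pmf (genM P m b)" by auto
  from add.prems obtain n where n: "{#} \<in> set_pmf (genM P n {#x#})" by (auto simp: gen_genM)
  have "{#} \<in> set_pmf (genM P m (add_mset x b))" if "m \<ge> max N n" for m
  proof -
    have "{#} \<in> set_pmf (genM P (n + (m - n)) {#x#})" by (rule genM_mono[OF n])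
    then have a: "{#} \<in> set_pmf (genM P m {#x#})" using that by simp
    have "{#} + {#} \<in> set_pmf (genM P m ({#x#} + b))" by (rule genM_plus[OF a]) (use N that in auto)
    then show ?thesis by simp
  qed
  then show ?case by blast
qed

lemma mortal_step:
  assumes "b \<in> set_pmf (P i)" "\<forall>j\<in>#b. \<exists>n. {#} \<in> set_pmf (gen P n j)"
  shows "\<exists>n. {#} \<in> set_pmf (gen P n i)"
proof -
  obtain N where "\<forall>m\<ge>N. {#} \<in> set_pmf (genM P m b)" using genM_mortal[OF assms(2)] by blast
  then have "{#} \<in> set_pmf (genM P (Suc N) {#i#})"
    unfolding genM_first offspring_single using assms(1) by auto
  then show ?thesis unfolding gen_genM by blast
qed

lemma offspring_closed:
  assumes "\<forall>j\<in>D. \<forall>b\<in>set_pmf (P j). set_mset b \<subseteq> D"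
  shows "set_mset z \<subseteq> D \<Longrightarrow> c \<in> set_pmf (offspring P z) \<Longrightarrow> set_mset c \<subseteq> D"
proof (induction z arbitrary: c)
  case empty
  then show ?case by simp
next
  case (add x z)
  then show ?case using assms unfolding set_offspring_add_mset by fastforce
qed

lemma genM_closed:
  assumes "\<forall>j\<in>D. \<forall>b\<in>set_pmf (P j). set_mset b \<subseteq> D"
  shows "set_mset z \<subseteq> D \<Longrightarrow> c \<in> set_pmf (genM P n z) \<Longrightarrow> set_mset c \<subseteq> D"
proof (induction n arbitrary: c)
  case 0
  then show ?case by simp
next
  case (Suc n)
  then show ?case using offspring_closed[OF assms] by (simp add: subset_iff) blast
qed

lemma ennreal_suminf_swap:
  fixes f :: "nat \<Rightarrow> nat \<Rightarrow> ennreal"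
  shows "(\<Sum>i. \<Sum>j. f i j) = (\<Sum>j. \<Sum>i. f i j)"
proof -
  have "(\<Sum>i. \<Sum>j. f i j) = (\<Sum>i. \<integral>\<^sup>+j. f i j \<partial>count_space UNIV)"
    by (simp add: nn_integral_count_space_nat)
  also have "\<dots> = (\<integral>\<^sup>+j. (\<Sum>i. f i j) \<partial>count_space UNIV)"
    by (rule nn_integral_suminf[symmetric]) auto
  also have "\<dots> = (\<Sum>j. \<Sum>i. f i j)"
    by (simp add: nn_integral_count_space_nat)
  finally show ?thesis .
qed

lemma ennreal_term_le_suminf: "f j \<le> (\<Sum>i. f i :: ennreal)"
  by (metis ennreal_suminf_lessD less_irrefl not_le)

lemma suminf_count_size: "(\<Sum>j. ennreal (real (count z j))) = ennreal (real (size z))"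
proof (induction z)
  case empty
  then show ?case by simp
next
  case (add x z)
  have "(\<Sum>j. ennreal (real (count (add_mset x z) j))) =
        (\<Sum>j. ennreal (real (count z j)) + (if j = x then 1 else 0))"
    by (rule suminf_cong) (auto simp: add.commute)
  also have "\<dots> = (\<Sum>j. ennreal (real (count z j))) + (\<Sum>j. (if j = x then 1 else 0::ennreal))"
    by (rule suminf_add[symmetric]) (auto intro: summableI)
  also have "(\<Sum>j. (if j = x then 1 else 0::ennreal)) = 1"
    using sums_single[of x "\<lambda>_. 1::ennreal"] by (simp add: sums_iff)
  finally show ?case using add.IH by (simp add: add.commute)
qed

lemma gen_one: "gen P 1 i = P i"
  by (simp add: bind_return_pmf offspring_single)

lemma Mmat_eq: "Mmat P i j = (\<integral>\<^sup>+z. ennreal (real (count z j)) \<partial>measure_pmf (P i))"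
  unfolding Mmat_def Mn_def by (simp add: gen_one offspring_single)

lemma Fn_zero: "Fn P n i (\<lambda>_. 0) = measure_pmf.prob (gen P n i) {z. size z = 0}"
proof -
  have e: "(\<lambda>z::nat multiset. \<Prod>j\<in>set_mset z. (0::real) ^ count z j) = indicator {z. size z = 0}"
  proof (rule ext)
    fix z :: "nat multiset"
    show "(\<Prod>j\<in>set_mset z. (0::real) ^ count z j) = indicator {z::nat multiset. size z = 0} z"
    proof (cases "z = {#}")
      case False
      then obtain j where "j \<in># z" by blast
      then have "(\<Prod>j\<in>set_mset z. (0::real) ^ count z j) = 0"
        by (intro prod_zero) auto
      then show ?thesis using False by (simp add: indicator_def)
    next
      case True
      then show ?thesis by (simp add: indicator_def)
    qed
  qed
  show ?thesis unfolding Fn_def e by simp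
qed

lemma linear_of_singletons:
  assumes sz: "\<forall>b\<in>set_pmf (P i). size b = 1" and s: "\<forall>j. 0 \<le> s j \<and> s j \<le> 1"
  shows "F P i s = (\<Sum>j. enn2real (Mmat P i j) * s j)"
proof -
  define h where "h z = the_elem (set_mset z)" for z :: "nat multiset"
  define Q where "Q = map_pmf h (P i)"
  have sing: "{#h b#} = b" if "b \<in> set_pmf (P i)" for b
  proof -
    from sz that have "size b = 1" by blast
    then obtain j where "b = {#j#}" using size_1_singleton_mset by blast
    then show ?thesis by (simp add: h_def)
  qed
  have PQ: "P i = map_pmf (\<lambda>j. {#j#}) Q"
    unfolding Q_def map_pmf_comp by (rule map_pmf_idI[symmetric]) (use sing in auto)
  have M: "Mmat P i j = ennreal (pmf Q j)" for j
  proof -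
    have e: "(\<lambda>k. ennreal (real (count {#k#} j))) = indicator {j}" by (auto simp: indicator_def)
    show ?thesis unfolding Mmat_eq PQ nn_integral_map_pmf e by (simp add: emeasure_pmf_single)
  qed
  have Fexp: "F P i s = measure_pmf.expectation Q s"
    unfolding F_def Fn_def gen_one PQ by simp
  have int: "integrable (measure_pmf Q) s"
    by (rule measure_pmf.integrable_const_bound[where B=1]) (use s in auto)
  have eq1: "ennreal (measure_pmf.expectation Q s) = (\<Sum>k. ennreal (pmf Q k * s k))"
  proof -
    have "ennreal (measure_pmf.expectation Q s) = (\<integral>\<^sup>+k. ennreal (s k) \<partial>measure_pmf Q)"
      by (rule nn_integral_eq_integral[symmetric]) (use int s in auto)
    also have "\<dots> = (\<Sum>k. ennreal (pmf Q k * s k))"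
      by (simp add: nn_integral_measure_pmf nn_integral_count_space_nat ennreal_mult' s)
    finally show ?thesis .
  qed
  have nt: "(\<Sum>k. ennreal (pmf Q k * s k)) \<noteq> top" by (simp flip: eq1)
  have nn: "\<And>k. 0 \<le> pmf Q k * s k" using s by simp
  have "ennreal (measure_pmf.expectation Q s) = ennreal (\<Sum>k. pmf Q k * s k)"
    using eq1 suminf_ennreal[OF nn nt] by simp
  moreover have "0 \<le> measure_pmf.expectation Q s" by (rule integral_nonneg_AE) (use s in auto)
  moreover have "0 \<le> (\<Sum>k. pmf Q k * s k)" by (rule suminf_nonneg[OF summable_suminf_not_top[OF nn nt] nn])
  ultimately have "measure_pmf.expectation Q s = (\<Sum>k. pmf Q k * s k)" by simp
  then show ?thesis unfolding Fexp M by simp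
qed

theorem lemma2:
  fixes P :: "nat \<Rightarrow> nat multiset pmf"
  assumes "in_M1 P"
    and "\<not> (\<forall>i. \<forall>s. (\<forall>j. 0 \<le> s j \<and> s j \<le> 1) \<longrightarrow>
                 F P i s = (\<Sum>j. enn2real (Mmat P i j) * s j))"
  shows "\<forall>i. \<exists>n. Fn P n i (\<lambda>_. 0) = measure_pmf.prob (gen P n i) {z. size z = 0}
                 \<and> Fn P n i (\<lambda>_. 0) > 0"
proof -
  define D where "D = {j. \<exists>n. {#} \<in> set_pmf (gen P n j)}"
  define I where "I = - D"
  have irr: "\<forall>i j. \<exists>n. Mn P n i j > 0" using assms(1) unfolding in_M1_def by blast
  obtain v :: "nat \<Rightarrow> real" where vpos: "\<forall>j. v j > 0"
    and veig: "\<forall>j. (\<Sum>i. ennreal (v i) * Mmat P i j) = ennreal (v j)"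
    and vsum: "(\<Sum>j. ennreal (v j)) = 1"
    using assms(1) unfolding in_M1_def by blast
  have A: "\<exists>j\<in>#b. j \<in> I" if "i \<in> I" "b \<in> set_pmf (P i)" for i b
  proof (rule ccontr)
    assume "\<not> (\<exists>j\<in>#b. j \<in> I)"
    then have "\<forall>j\<in>#b. \<exists>n. {#} \<in> set_pmf (gen P n j)" unfolding I_def D_def by auto
    from mortal_step[OF that(2) this] have "i \<in> D" unfolding D_def by auto
    then show False using that(1) unfolding I_def by auto
  qed
  define cI where "cI z = (\<Sum>j. if j \<in> I then ennreal (real (count z j)) else 0)" for z :: "nat multiset"
  define S where "S i = (\<Sum>j. if j \<in> I then Mmat P i j else 0)" for i
  have S_eq: "S i = (\<integral>\<^sup>+z. cI z \<partial>measure_pmf (P i))" for i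
  proof -
    have "S i = (\<Sum>j. \<integral>\<^sup>+z. (if j \<in> I then ennreal (real (count z j)) else 0) \<partial>measure_pmf (P i))"
      unfolding S_def Mmat_eq by (rule suminf_cong) auto
    also have "\<dots> = (\<integral>\<^sup>+z. cI z \<partial>measure_pmf (P i))"
      unfolding cI_def by (rule nn_integral_suminf[symmetric]) auto
    finally show ?thesis .
  qed
  have cI_ge: "cI z \<ge> ennreal (real (count z j))" if "j \<in> I" for z j
    unfolding cI_def using ennreal_term_le_suminf[of "\<lambda>j. if j \<in> I then ennreal (real (count z j)) else 0" j] that
    by simp
  have S_ge: "1 \<le> S i" if iI: "i \<in> I" for i
  proof -
    have "(\<integral>\<^sup>+z. 1 \<partial>measure_pmf (P i)) \<le> (\<integral>\<^sup>+z. cI z \<partial>measure_pmf (P i))"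
    proof (rule nn_integral_mono_AE, rule AE_pmfI)
      fix b assume "b \<in> set_pmf (P i)"
      then obtain j where "j \<in># b" "j \<in> I" using A[OF iI] by blast
      then have "1 \<le> ennreal (real (count b j))" by simp
      also have "\<dots> \<le> cI b" using cI_ge[OF \<open>j \<in> I\<close>] .
      finally show "1 \<le> cI b" .
    qed
    then show ?thesis by (simp add: S_eq)
  qed
  have eig: "(\<Sum>j. if j \<in> I then ennreal (v j) else 0) = (\<Sum>i. ennreal (v i) * S i)"
  proof -
    have "(\<Sum>j. if j \<in> I then ennreal (v j) else 0) = (\<Sum>j. \<Sum>i. if j \<in> I then ennreal (v i) * Mmat P i j else 0)"
      by (rule suminf_cong) (auto simp: veig)
    also have "\<dots> = (\<Sum>i. \<Sum>j. if j \<in> I then ennreal (v i) * Mmat P i j else 0)"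
      by (rule ennreal_suminf_swap[symmetric])
    also have "\<dots> = (\<Sum>i. ennreal (v i) * S i)"
      unfolding S_def by (rule suminf_cong) (subst ennreal_suminf_cmult[symmetric], rule suminf_cong, simp)
    finally show ?thesis .
  qed
  define a where "a i = (if i \<in> I then 1 else 0::ennreal)" for i
  have aS: "a i \<le> S i" for i using S_ge by (auto simp: a_def)
  have spl: "(\<Sum>i. ennreal (v i) * S i) = (\<Sum>i. ennreal (v i) * a i) + (\<Sum>i. ennreal (v i) * (S i - a i))"
  proof -
    have "(\<Sum>i. ennreal (v i) * S i) = (\<Sum>i. ennreal (v i) * a i + ennreal (v i) * (S i - a i))"
      by (rule suminf_cong) (simp add: distrib_left[symmetric] add_diff_inverse_ennreal aS)
    also have "\<dots> = (\<Sum>i. ennreal (v i) * a i) + (\<Sum>i. ennreal (v i) * (S i - a i))"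
      by (rule suminf_add[symmetric]) (auto intro: summableI)
    finally show ?thesis .
  qed
  have X: "(\<Sum>i. ennreal (v i) * a i) = (\<Sum>j. if j \<in> I then ennreal (v j) else 0)"
    by (rule suminf_cong) (simp add: a_def)
  have "(\<Sum>j. if j \<in> I then ennreal (v j) else 0) \<le> (\<Sum>j. ennreal (v j))"
    by (rule suminf_le) (auto intro: summableI)
  then have Xfin: "(\<Sum>j. if j \<in> I then ennreal (v j) else 0) \<noteq> top" using vsum by (auto simp: top_unique)
  have Y0: "(\<Sum>i. ennreal (v i) * (S i - a i)) = 0"
  proof -
    have "(\<Sum>j. if j \<in> I then ennreal (v j) else 0) + 0 =
          (\<Sum>j. if j \<in> I then ennreal (v j) else 0) + (\<Sum>i. ennreal (v i) * (S i - a i))"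
      using eig spl X by simp
    then show ?thesis using Xfin by (simp add: ennreal_add_left_cancel)
  qed
  have Sa: "S i = a i" for i
  proof -
    have "ennreal (v i) * (S i - a i) = 0"
      using Y0 suminf_eq_zero_iff[of "\<lambda>i. ennreal (v i) * (S i - a i)"] by (auto intro: summableI)
    moreover have "ennreal (v i) \<noteq> 0" using vpos[rule_format, of i] by simp
    ultimately have "S i - a i = 0" by simp
    then have "S i \<le> a i" by (simp add: diff_eq_0_iff_ennreal)
    then show ?thesis using aS[of i] by simp
  qed
  have closed: "\<forall>j\<in>D. \<forall>b\<in>set_pmf (P j). set_mset b \<subseteq> D"
  proof (intro ballI subsetI)
    fix j b k assume jD: "j \<in> D" and b: "b \<in> set_pmf (P j)" and k: "k \<in># b"
    have "S j = 0" using Sa[of j] jD by (simp add: a_def I_def)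
    then have "(\<integral>\<^sup>+z. cI z \<partial>measure_pmf (P j)) = 0" by (simp add: S_eq)
    then have "AE z in measure_pmf (P j). cI z = 0" by (subst (asm) nn_integral_0_iff_AE) auto
    then have c0: "cI b = 0" using b by (simp add: AE_measure_pmf_iff)
    show "k \<in> D"
    proof (rule ccontr)
      assume "k \<notin> D"
      then have "k \<in> I" by (simp add: I_def)
      from cI_ge[OF this, of b] k c0 show False by (simp add: count_eq_zero_iff)
    qed
  qed
  have allD: "D = UNIV" if Dne: "D \<noteq> {}"
  proof (rule ccontr)
    assume "D \<noteq> UNIV"
    then obtain j where jD: "j \<notin> D" by auto
    obtain d where dD: "d \<in> D" using Dne by auto
    obtain n where pos: "Mn P n d j > 0" using irr by blast
    have "AE z in measure_pmf (gen P n d). ennreal (real (count z j)) = 0"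
    proof (rule AE_pmfI)
      fix c assume "c \<in> set_pmf (gen P n d)"
      then have "set_mset c \<subseteq> D" using genM_closed[OF closed, of "{#d#}" c n] dD by (simp add: gen_genM)
      with jD show "ennreal (real (count c j)) = 0" by (auto simp: count_eq_zero_iff)
    qed
    then have "Mn P n d j = 0" unfolding Mn_def by (simp add: nn_integral_0_iff_AE)
    with pos show False by simp
  qed
  have DU: "D = UNIV"
  proof (rule ccontr)
    assume nU: "D \<noteq> UNIV"
    with allD have "D = {}" by blast
    then have IU: "I = UNIV" by (simp add: I_def)
    have cIsize: "cI z = ennreal (real (size z))" for z using suminf_count_size[of z] by (simp add: cI_def IU)
    have size1: "\<forall>b\<in>set_pmf (P i). size b = 1" for i
    proof
      fix b assume b: "b \<in> set_pmf (P i)"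
      have S1: "(\<integral>\<^sup>+z. ennreal (real (size z)) \<partial>measure_pmf (P i)) = 1"
        using Sa[of i] S_eq[of i] by (simp add: a_def IU cIsize)
      have ge: "size z \<ge> 1" if "z \<in> set_pmf (P i)" for z
        using A[of i z] that IU by (cases z) auto
      have "(\<integral>\<^sup>+z. ennreal (real (size z)) \<partial>measure_pmf (P i)) =
            (\<integral>\<^sup>+z. 1 + ennreal (real (size z - 1)) \<partial>measure_pmf (P i))"
      proof (rule nn_integral_cong_AE, rule AE_pmfI)
        fix z assume "z \<in> set_pmf (P i)"
        then have "size z \<ge> 1" by (rule ge)
        then have "real (size z) = 1 + real (size z - 1)" by (simp add: of_nat_diff)
        moreover have "ennreal (1 + real (size z - 1)) = ennreal 1 + ennreal (real (size z - 1))"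
          by (rule ennreal_plus) auto
        ultimately show "ennreal (real (size z)) = 1 + ennreal (real (size z - 1))"
          by (metis ennreal_1)
      qed
      also have "\<dots> = 1 + (\<integral>\<^sup>+z. ennreal (real (size z - 1)) \<partial>measure_pmf (P i))"
        by (subst nn_integral_add) (auto simp: measure_pmf.emeasure_space_1)
      finally have "1 + (\<integral>\<^sup>+z. ennreal (real (size z - 1)) \<partial>measure_pmf (P i)) = 1 + 0"
        using S1 by simp
      then have "(\<integral>\<^sup>+z. ennreal (real (size z - 1)) \<partial>measure_pmf (P i)) = 0"
        by (simp add: ennreal_add_left_cancel)
      then have "AE z in measure_pmf (P i). ennreal (real (size z - 1)) = 0"
        by (subst (asm) nn_integral_0_iff_AE) auto
      then have "size b - 1 = 0" using b by (simp add: AE_measure_pmf_iff)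
      then show "size b = 1" using ge[OF b] by simp
    qed
    have "\<forall>i. \<forall>s. (\<forall>j. 0 \<le> s j \<and> s j \<le> 1) \<longrightarrow> F P i s = (\<Sum>j. enn2real (Mmat P i j) * s j)"
    proof (intro allI impI)
      fix i and s :: "nat \<Rightarrow> real" assume "\<forall>j. 0 \<le> s j \<and> s j \<le> (1::real)"
      then show "F P i s = (\<Sum>j. enn2real (Mmat P i j) * s j)" by (rule linear_of_singletons[OF size1])
    qed
    then show False using assms(2) by (rule notE[rotated])
  qed
  show ?thesis
  proof
    fix i
    have "i \<in> D" using DU by simp
    then obtain n where n: "{#} \<in> set_pmf (gen P n i)" unfolding D_def by blast
    have "measure_pmf.prob (gen P n i) {z. size z = 0} \<noteq> 0"
      using n by (subst measure_pmf_zero_iff) auto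
    then have "measure_pmf.prob (gen P n i) {z. size z = 0} > 0"
      using measure_nonneg[of "measure_pmf (gen P n i)" "{z. size z = 0}"] by linarith
    then show "\<exists>n. Fn P n i (\<lambda>_. 0) = measure_pmf.prob (gen P n i) {z. size z = 0} \<and> Fn P n i (\<lambda>_. 0) > 0"
      using Fn_zero by metis
  qed
qed

end
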